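(* Let $(M,d)$ be a compact metric space, $\varphi:M\to M$ continuous, and $\mathcal G=\{G_n\}_{n\ge1}\subset B(M)$. If $\mathcal G$ satisfies any of the following, it is asymptotically additive: (1) $G_n=S_nG$ for all $n$ with $G\in C(M)$; (2) $G_n=S_nG$ for all $n$ with $G\in B(M)$, and $\mathcal G$ has tempered variation; (3) $\mathcal G$ is weakly almost additive and $G_n\in C(M)$ for each $n$; (4) $\mathcal G$ is weakly almost additive and has tempered variation. If $\mathcal G\subset C(M)$, then asymptotic additivity of $\mathcal G$ is equivalent to: (5) $\lim_{k\to\infty}\limsup_{n\to\infty}n^{-1}\|G_n-k^{-1}S_nG_k\|_\infty=0$. For $\mathcal G\subset B(M)$, each of the following is equivalent to asymptotic additivity of $\mathcal G$: (6) $\mathcal G$ has tempered variation and satisfies the relation in (5); (7) $\mathcal G$ has tempered variation and there is $\{G^{(k)}\}\subset B(M)$ with $\lim_k\limsup_nn^{-1}\|G_n-S_nG^{(k)}\|_\infty=0$; (8) there is $\{G^{(k)}\}\subset B(M)$ with $\lim_k\limsup_nn^{-1}\|G_n-S_nG^{(k)}\|_\infty=0$ and $\lim_{k\to\infty}\lim_{\epsilon\downarrow0}\limsup_{n\to\infty}\sup_{x\in M}\sup_{y,z\in B_n(x,\epsilon)}\frac1n|S_nG^{(k)}(y)-S_nG^{(k)}(z)|=0$.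
   Context: $C(M)$ (resp. $B(M)$): real continuous (resp. bounded Borel) functions on $M$, $\|f\|_\infty=\sup|f|$. $S_nG=\sum_{k=0}^{n-1}G\circ\varphi^k$. $B_n(x,\epsilon)=\{y:d(\varphi^ky,\varphi^kx)<\epsilon,\ 0\le k\le n-1\}$. $\mathcal G$ is asymptotically additive if there is $\{G^{(k)}\}\subset C(M)$ with $\lim_k\limsup_nn^{-1}\|G_n-S_nG^{(k)}\|_\infty=0$. Tempered variation: $\lim_{\epsilon\downarrow0}\limsup_{n\to\infty}\sup_{x\in M}\sup_{y,z\in B_n(x,\epsilon)}\frac1n|G_n(y)-G_n(z)|=0$. Weakly almost additive: there is a real sequence $\{C_n\}$ with $C_n/n\to0$ and $-C_m+G_m+G_n\circ\varphi^m\le G_{m+n}\le C_m+G_m+G_n\circ\varphi^m$ for all $m,n\ge1$. *)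

theory Defs
  imports "HOL-Analysis.Analysis"
begin

text \<open>The compact metric space M is the whole carrier type 'a.\<close>

definition birkhoff_sum :: "('a \<Rightarrow> 'a) \<Rightarrow> ('a \<Rightarrow> real) \<Rightarrow> nat \<Rightarrow> 'a \<Rightarrow> real" where
  "birkhoff_sum \<phi> g n x = (\<Sum>k<n. g ((\<phi> ^^ k) x))"

definition bowen_ball :: "('a::metric_space \<Rightarrow> 'a) \<Rightarrow> nat \<Rightarrow> 'a \<Rightarrow> real \<Rightarrow> 'a set" where
  "bowen_ball \<phi> n x \<epsilon> = {y. \<forall>k<n. dist ((\<phi> ^^ k) y) ((\<phi> ^^ k) x) < \<epsilon>}"

definition bfun :: "('a::metric_space \<Rightarrow> real) \<Rightarrow> bool" where
  "bfun f \<longleftrightarrow> f \<in> borel_measurable borel \<and> bounded (range f)"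

definition supnorm :: "('a \<Rightarrow> real) \<Rightarrow> real" where
  "supnorm f = (SUP x. \<bar>f x\<bar>)"

definition var_n :: "('a::metric_space \<Rightarrow> 'a) \<Rightarrow> (nat \<Rightarrow> 'a \<Rightarrow> real) \<Rightarrow> nat \<Rightarrow> real \<Rightarrow> ereal" where
  "var_n \<phi> F n \<epsilon> = (SUP x. SUP y\<in>bowen_ball \<phi> n x \<epsilon>. SUP z\<in>bowen_ball \<phi> n x \<epsilon>.
      ereal (\<bar>F n y - F n z\<bar> / real n))"

definition tempered_variation :: "('a::metric_space \<Rightarrow> 'a) \<Rightarrow> (nat \<Rightarrow> 'a \<Rightarrow> real) \<Rightarrow> bool" where
  "tempered_variation \<phi> F \<longleftrightarrow> ((\<lambda>\<epsilon>. limsup (\<lambda>n. var_n \<phi> F n \<epsilon>)) \<longlongrightarrow> 0) (at_right 0)"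

definition asymp_approx :: "('a \<Rightarrow> 'a) \<Rightarrow> (nat \<Rightarrow> 'a \<Rightarrow> real) \<Rightarrow> (nat \<Rightarrow> 'a \<Rightarrow> real) \<Rightarrow> bool" where
  "asymp_approx \<phi> G Gk \<longleftrightarrow>
     (\<lambda>k. limsup (\<lambda>n. ereal (supnorm (\<lambda>x. G n x - birkhoff_sum \<phi> (Gk k) n x) / real n)))
       \<longlonglongrightarrow> 0"

definition asymptotically_additive :: "('a::metric_space \<Rightarrow> 'a) \<Rightarrow> (nat \<Rightarrow> 'a \<Rightarrow> real) \<Rightarrow> bool" where
  "asymptotically_additive \<phi> G \<longleftrightarrow>
     (\<exists>Gk. (\<forall>k. continuous_on UNIV (Gk k)) \<and> asymp_approx \<phi> G Gk)"

definition weakly_almost_additive :: "('a \<Rightarrow> 'a) \<Rightarrow> (nat \<Rightarrow> 'a \<Rightarrow> real) \<Rightarrow> bool" where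
  "weakly_almost_additive \<phi> G \<longleftrightarrow>
     (\<exists>C :: nat \<Rightarrow> real. (\<lambda>n. C n / real n) \<longlonglongrightarrow> 0 \<and>
        (\<forall>m\<ge>1. \<forall>n\<ge>1. \<forall>x.
           - C m + G m x + G n ((\<phi> ^^ m) x) \<le> G (m + n) x \<and>
           G (m + n) x \<le> C m + G m x + G n ((\<phi> ^^ m) x)))"

definition cond5 :: "('a \<Rightarrow> 'a) \<Rightarrow> (nat \<Rightarrow> 'a \<Rightarrow> real) \<Rightarrow> bool" where
  "cond5 \<phi> G \<longleftrightarrow>
     (\<lambda>k. limsup (\<lambda>n. ereal (supnorm (\<lambda>x. G n x - birkhoff_sum \<phi> (G k) n x / real k) / real n)))
       \<longlonglongrightarrow> 0"

end

theory Submission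
  imports Defs
begin

lemma bs_add: "birkhoff_sum \<phi> g (m+n) x = birkhoff_sum \<phi> g m x + birkhoff_sum \<phi> g n ((\<phi>^^m) x)"
  unfolding birkhoff_sum_def
proof (induction n)
  case 0 then show ?case by simp
next
  case (Suc n)
  have "(\<phi> ^^ (m + n)) x = (\<phi> ^^ n) ((\<phi> ^^ m) x)"
    by (metis add.commute comp_apply funpow_add)
  then show ?case using Suc by (simp add: algebra_simps)
qed

lemma bs_bound: assumes "\<forall>x. \<bar>g x\<bar> \<le> B" shows "\<bar>birkhoff_sum \<phi> g n x\<bar> \<le> real n * B"
proof -
  have "\<bar>birkhoff_sum \<phi> g n x\<bar> \<le> (\<Sum>k<n. \<bar>g ((\<phi> ^^ k) x)\<bar>)"
    unfolding birkhoff_sum_def by (rule sum_abs)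
  also have "\<dots> \<le> (\<Sum>k<n. B)" by (rule sum_mono) (use assms in auto)
  finally show ?thesis by simp
qed

lemma bs_diff: assumes "\<forall>x. \<bar>f x - g x\<bar> \<le> c"
  shows "\<bar>birkhoff_sum \<phi> f n x - birkhoff_sum \<phi> g n x\<bar> \<le> real n * c"
proof -
  have "birkhoff_sum \<phi> f n x - birkhoff_sum \<phi> g n x = birkhoff_sum \<phi> (\<lambda>y. f y - g y) n x"
    unfolding birkhoff_sum_def by (simp add: sum_subtractf)
  then show ?thesis using bs_bound[of "\<lambda>y. f y - g y" c] assms by simp
qed

lemma bs_div: "birkhoff_sum \<phi> (\<lambda>x. g x / c) n x = birkhoff_sum \<phi> g n x / c"
  unfolding birkhoff_sum_def by (simp add: sum_divide_distrib)

lemma bs_shift: assumes "\<forall>x. \<bar>g x\<bar> \<le> B"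
  shows "\<bar>birkhoff_sum \<phi> g n ((\<phi>^^j) x) - birkhoff_sum \<phi> g n x\<bar> \<le> 2 * real j * B"
proof -
  have e: "birkhoff_sum \<phi> g n ((\<phi>^^j) x) - birkhoff_sum \<phi> g n x
      = birkhoff_sum \<phi> g j ((\<phi>^^n) x) - birkhoff_sum \<phi> g j x"
    using bs_add[of \<phi> g j n x] bs_add[of \<phi> g n j x] by (simp add: add.commute)
  have "\<bar>birkhoff_sum \<phi> g j ((\<phi>^^n) x)\<bar> \<le> real j * B" "\<bar>birkhoff_sum \<phi> g j x\<bar> \<le> real j * B"
    using bs_bound[OF assms] by auto
  then show ?thesis unfolding e by linarith
qed

lemma bs_double: "birkhoff_sum \<phi> (birkhoff_sum \<phi> g k) n x = (\<Sum>j<k. birkhoff_sum \<phi> g n ((\<phi>^^j) x))"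
proof -
  have c: "(\<phi> ^^ j) ((\<phi> ^^ i) x) = (\<phi> ^^ i) ((\<phi> ^^ j) x)" for i j
    by (metis add.commute comp_apply funpow_add)
  show ?thesis unfolding birkhoff_sum_def
    by (subst sum.swap) (simp add: c)
qed

lemma bounded_range_iff: "bounded (range (f::'b \<Rightarrow> real)) \<longleftrightarrow> (\<exists>B. \<forall>x. \<bar>f x\<bar> \<le> B)"
  unfolding bounded_iff by auto

lemma sn_upper: assumes "bounded (range (f::'b \<Rightarrow> real))" shows "\<bar>f x\<bar> \<le> supnorm f"
proof -
  obtain B where "\<forall>x. \<bar>f x\<bar> \<le> B" using assms bounded_range_iff by blast
  then have "bdd_above (range (\<lambda>x. \<bar>f x\<bar>))" by (auto intro: bdd_aboveI2)
  then show ?thesis unfolding supnorm_def using cSUP_upper[of x UNIV "\<lambda>x. \<bar>f x\<bar>"] by simp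
qed

lemma sn_least: assumes "\<forall>x. \<bar>(f::'b \<Rightarrow> real) x\<bar> \<le> c" shows "supnorm f \<le> c"
  unfolding supnorm_def using assms by (intro cSUP_least) auto

lemma sn_le_iff: assumes "bounded (range (f::'b \<Rightarrow> real))"
  shows "supnorm f \<le> c \<longleftrightarrow> (\<forall>x. \<bar>f x\<bar> \<le> c)"
  using sn_upper[OF assms] sn_least[of f c] by (meson order_trans)

lemma sn_nonneg: assumes "bounded (range (f::'b \<Rightarrow> real))" shows "0 \<le> supnorm f"
  using sn_upper[OF assms, of undefined] by linarith

lemma lim_limsup_iff:
  fixes b :: "nat \<Rightarrow> nat \<Rightarrow> real"
  assumes nn: "\<forall>k. eventually (\<lambda>n. 0 \<le> b k n) sequentially"
  shows "(\<lambda>k. limsup (\<lambda>n. ereal (b k n))) \<longlonglongrightarrow> 0 \<longleftrightarrow>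
     (\<forall>\<delta>>0. eventually (\<lambda>k. eventually (\<lambda>n. b k n \<le> \<delta>) sequentially) sequentially)"
proof
  assume t: "(\<lambda>k. limsup (\<lambda>n. ereal (b k n))) \<longlonglongrightarrow> 0"
  show "\<forall>\<delta>>0. eventually (\<lambda>k. eventually (\<lambda>n. b k n \<le> \<delta>) sequentially) sequentially"
  proof (intro allI impI)
    fix \<delta> :: real assume "\<delta> > 0"
    then have "eventually (\<lambda>k. limsup (\<lambda>n. ereal (b k n)) < ereal \<delta>) sequentially"
      using order_tendstoD(2)[OF t] by simp
    then show "eventually (\<lambda>k. eventually (\<lambda>n. b k n \<le> \<delta>) sequentially) sequentially"
    proof (rule eventually_mono)
      fix k assume "limsup (\<lambda>n. ereal (b k n)) < ereal \<delta>"
      from Limsup_lessD[OF this] show "eventually (\<lambda>n. b k n \<le> \<delta>) sequentially"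
        by (rule eventually_mono) simp
    qed
  qed
next
  assume H: "\<forall>\<delta>>0. eventually (\<lambda>k. eventually (\<lambda>n. b k n \<le> \<delta>) sequentially) sequentially"
  show "(\<lambda>k. limsup (\<lambda>n. ereal (b k n))) \<longlonglongrightarrow> 0"
  proof (rule order_tendstoI)
    fix a :: ereal assume "a < 0"
    have "0 \<le> limsup (\<lambda>n. ereal (b k n))" for k
      by (rule le_Limsup) (use nn in \<open>auto elim: eventually_mono\<close>)
    then have "\<And>k. a < limsup (\<lambda>n. ereal (b k n))"
      using \<open>a < 0\<close> by (meson less_le_trans)
    then show "eventually (\<lambda>k. a < limsup (\<lambda>n. ereal (b k n))) sequentially"
      by (intro always_eventually allI)
  next
    fix a :: ereal assume "0 < a"
    obtain z where z: "0 < ereal z" "ereal z < a" using ereal_dense2[OF \<open>0 < a\<close>] by blast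
    have "z > 0" using z by simp
    from H[rule_format, of "z/2"] \<open>z > 0\<close>
    have "eventually (\<lambda>k. eventually (\<lambda>n. b k n \<le> z/2) sequentially) sequentially" by simp
    then show "eventually (\<lambda>k. limsup (\<lambda>n. ereal (b k n)) < a) sequentially"
    proof (rule eventually_mono)
      fix k assume "eventually (\<lambda>n. b k n \<le> z/2) sequentially"
      then have "limsup (\<lambda>n. ereal (b k n)) \<le> ereal (z/2)"
        by (intro Limsup_bounded) (auto elim: eventually_mono)
      also have "\<dots> < ereal z" using \<open>z > 0\<close> by simp
      finally show "limsup (\<lambda>n. ereal (b k n)) < a" using z by simp
    qed
  qed
qed

definition osc_ev :: "('a::metric_space \<Rightarrow> 'a) \<Rightarrow> (nat \<Rightarrow> 'a \<Rightarrow> real) \<Rightarrow> real \<Rightarrow> bool" where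
  "osc_ev \<phi> F \<delta> \<longleftrightarrow> (\<exists>\<epsilon>>0. eventually (\<lambda>n. \<forall>x y z. y \<in> bowen_ball \<phi> n x \<epsilon> \<longrightarrow>
       z \<in> bowen_ball \<phi> n x \<epsilon> \<longrightarrow> \<bar>F n y - F n z\<bar> \<le> \<delta> * real n) sequentially)"

lemma var_le: assumes "var_n \<phi> F n \<epsilon> \<le> ereal c" "y \<in> bowen_ball \<phi> n x \<epsilon>" "z \<in> bowen_ball \<phi> n x \<epsilon>"
  shows "\<bar>F n y - F n z\<bar> / real n \<le> c"
proof -
  have "ereal (\<bar>F n y - F n z\<bar> / real n) \<le> var_n \<phi> F n \<epsilon>"
    unfolding var_n_def
    by (rule SUP_upper2[of x], simp, rule SUP_upper2[OF assms(2)], rule SUP_upper2[OF assms(3)]) simp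
  then have "ereal (\<bar>F n y - F n z\<bar> / real n) \<le> ereal c" using assms(1) by (rule order_trans)
  then show ?thesis by simp
qed

lemma var_least: assumes "\<forall>x y z. y \<in> bowen_ball \<phi> n x \<epsilon> \<longrightarrow> z \<in> bowen_ball \<phi> n x \<epsilon> \<longrightarrow>
      \<bar>F n y - F n z\<bar> / real n \<le> c"
  shows "var_n \<phi> F n \<epsilon> \<le> ereal c"
  unfolding var_n_def using assms by (intro SUP_least) auto

lemma bowen_self: "\<epsilon> > 0 \<Longrightarrow> x \<in> bowen_ball \<phi> n x \<epsilon>"
  unfolding bowen_ball_def by simp

lemma bowen_mono: "\<epsilon> \<le> \<epsilon>' \<Longrightarrow> bowen_ball \<phi> n x \<epsilon> \<subseteq> bowen_ball \<phi> n x \<epsilon>'"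
  unfolding bowen_ball_def by fastforce

lemma var_nonneg: assumes "\<epsilon> > 0" shows "0 \<le> var_n \<phi> F n \<epsilon>"
proof -
  have "ereal (\<bar>F n x - F n x\<bar> / real n) \<le> var_n \<phi> F n \<epsilon>" for x
  proof -
    have bx: "x \<in> bowen_ball \<phi> n x \<epsilon>" using bowen_self[OF assms] .
    show ?thesis unfolding var_n_def
      by (rule SUP_upper2[of x], simp, rule SUP_upper2[OF bx], rule SUP_upper2[OF bx]) simp
  qed
  then show ?thesis by (simp add: zero_ereal_def)
qed

lemma lim_var_osc:
  assumes t: "((\<lambda>\<epsilon>. limsup (\<lambda>n. var_n \<phi> F n \<epsilon>)) \<longlongrightarrow> l) (at_right 0)" and l: "l < ereal \<delta>"
  shows "osc_ev \<phi> F \<delta>"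
proof -
  have "eventually (\<lambda>\<epsilon>. limsup (\<lambda>n. var_n \<phi> F n \<epsilon>) < ereal \<delta>) (at_right (0::real))"
    using order_tendstoD(2)[OF t l] .
  then obtain b::real where b: "b > 0" "\<forall>y>0. y < b \<longrightarrow> limsup (\<lambda>n. var_n \<phi> F n y) < ereal \<delta>"
    unfolding eventually_at_right_field by blast
  define \<epsilon> where "\<epsilon> = b/2"
  have "\<epsilon> > 0" "\<epsilon> < b" using b by (auto simp: \<epsilon>_def)
  then have "limsup (\<lambda>n. var_n \<phi> F n \<epsilon>) < ereal \<delta>" using b by auto
  from Limsup_lessD[OF this] have ev: "eventually (\<lambda>n. var_n \<phi> F n \<epsilon> < ereal \<delta>) sequentially" .
  have "eventually (\<lambda>n. \<forall>x y z. y \<in> bowen_ball \<phi> n x \<epsilon> \<longrightarrow>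
       z \<in> bowen_ball \<phi> n x \<epsilon> \<longrightarrow> \<bar>F n y - F n z\<bar> \<le> \<delta> * real n) sequentially"
    using ev eventually_ge_at_top[of "1::nat"]
  proof eventually_elim
    case (elim n)
    show ?case
    proof (intro allI impI)
      fix x y z assume "y \<in> bowen_ball \<phi> n x \<epsilon>" "z \<in> bowen_ball \<phi> n x \<epsilon>"
      from var_le[OF less_imp_le[OF elim(1)] this] have "\<bar>F n y - F n z\<bar> / real n \<le> \<delta>" .
      then show "\<bar>F n y - F n z\<bar> \<le> \<delta> * real n" using elim(2) by (simp add: divide_le_eq)
    qed
  qed
  then show ?thesis unfolding osc_ev_def using \<open>\<epsilon> > 0\<close> by blast
qed

lemma osc_lim:
  assumes H: "\<forall>\<delta>>0. osc_ev \<phi> F \<delta>"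
  shows "((\<lambda>\<epsilon>. limsup (\<lambda>n. var_n \<phi> F n \<epsilon>)) \<longlongrightarrow> 0) (at_right 0)"
proof (rule order_tendstoI)
  fix a :: ereal assume "a < 0"
  have "eventually (\<lambda>\<epsilon>::real. \<epsilon> > 0) (at_right 0)" by (simp add: eventually_at_right_field) (use zero_less_one in blast)
  then show "eventually (\<lambda>\<epsilon>. a < limsup (\<lambda>n. var_n \<phi> F n \<epsilon>)) (at_right 0)"
  proof (rule eventually_mono)
    fix \<epsilon> :: real assume "\<epsilon> > 0"
    have "0 \<le> limsup (\<lambda>n. var_n \<phi> F n \<epsilon>)"
      by (rule le_Limsup) (use var_nonneg[OF \<open>\<epsilon> > 0\<close>] in \<open>auto intro: always_eventually\<close>)
    then show "a < limsup (\<lambda>n. var_n \<phi> F n \<epsilon>)" using \<open>a < 0\<close> by (meson less_le_trans)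
  qed
next
  fix a :: ereal assume "0 < a"
  obtain z where z: "0 < ereal z" "ereal z < a" using ereal_dense2[OF \<open>0 < a\<close>] by blast
  have "z > 0" using z by simp
  then obtain \<epsilon>0 where e0: "\<epsilon>0 > 0" and ev: "eventually (\<lambda>n. \<forall>x y z'. y \<in> bowen_ball \<phi> n x \<epsilon>0 \<longrightarrow>
       z' \<in> bowen_ball \<phi> n x \<epsilon>0 \<longrightarrow> \<bar>F n y - F n z'\<bar> \<le> (z/2) * real n) sequentially"
    using H[rule_format, of "z/2"] unfolding osc_ev_def by auto
  show "eventually (\<lambda>\<epsilon>. limsup (\<lambda>n. var_n \<phi> F n \<epsilon>) < a) (at_right 0)"
    unfolding eventually_at_right_field
  proof (intro exI[of _ \<epsilon>0] conjI allI impI)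
    show "0 < \<epsilon>0" by fact
    fix \<epsilon> :: real assume "0 < \<epsilon>" "\<epsilon> < \<epsilon>0"
    have "eventually (\<lambda>n. var_n \<phi> F n \<epsilon> \<le> ereal (z/2)) sequentially"
      using ev eventually_ge_at_top[of "1::nat"]
    proof eventually_elim
      case (elim n)
      show ?case
      proof (rule var_least, intro allI impI)
        fix x y z' assume "y \<in> bowen_ball \<phi> n x \<epsilon>" "z' \<in> bowen_ball \<phi> n x \<epsilon>"
        then have "y \<in> bowen_ball \<phi> n x \<epsilon>0" "z' \<in> bowen_ball \<phi> n x \<epsilon>0"
          using bowen_mono[of \<epsilon> \<epsilon>0] \<open>\<epsilon> < \<epsilon>0\<close> by auto
        then have "\<bar>F n y - F n z'\<bar> \<le> (z/2) * real n" using elim(1) by blast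
        then show "\<bar>F n y - F n z'\<bar> / real n \<le> z/2" using elim(2) by (simp add: divide_le_eq)
      qed
    qed
    then have "limsup (\<lambda>n. var_n \<phi> F n \<epsilon>) \<le> ereal (z/2)" by (rule Limsup_bounded)
    also have "\<dots> < ereal z" using \<open>z > 0\<close> by simp
    finally show "limsup (\<lambda>n. var_n \<phi> F n \<epsilon>) < a" using z by simp
  qed
qed

lemma TV_iff: "tempered_variation \<phi> F \<longleftrightarrow> (\<forall>\<delta>>0. osc_ev \<phi> F \<delta>)"
  unfolding tempered_variation_def using lim_var_osc[of \<phi> F 0] osc_lim[of \<phi> F] by auto

definition approxP :: "('a \<Rightarrow> 'a) \<Rightarrow> (nat \<Rightarrow> 'a \<Rightarrow> real) \<Rightarrow> (nat \<Rightarrow> 'a \<Rightarrow> real) \<Rightarrow> bool" where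
  "approxP \<phi> G Gk \<longleftrightarrow> (\<forall>\<delta>>0. eventually (\<lambda>k. eventually (\<lambda>n. \<forall>x.
      \<bar>G n x - birkhoff_sum \<phi> (Gk k) n x\<bar> \<le> \<delta> * real n) sequentially) sequentially)"

lemma diff_bounded:
  assumes "bounded (range (f::'a \<Rightarrow> real))" "bounded (range g)"
  shows "bounded (range (\<lambda>x. f x - birkhoff_sum \<phi> g n x))"
proof -
  obtain A where A: "\<forall>x. \<bar>f x\<bar> \<le> A" using assms(1) bounded_range_iff by blast
  obtain B where B: "\<forall>x. \<bar>g x\<bar> \<le> B" using assms(2) bounded_range_iff by blast
  have "\<bar>f x - birkhoff_sum \<phi> g n x\<bar> \<le> A + real n * B" for x
    using A[rule_format, of x] bs_bound[OF B, of \<phi> n x] by linarith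
  then show ?thesis unfolding bounded_range_iff by blast
qed

lemma approx_iff:
  assumes bG: "\<forall>n\<ge>1. bounded (range (G n))" and bK: "\<forall>k. bounded (range (Gk k))"
  shows "asymp_approx \<phi> G Gk \<longleftrightarrow> approxP \<phi> G Gk"
proof -
  define b where "b k n = supnorm (\<lambda>x. G n x - birkhoff_sum \<phi> (Gk k) n x) / real n" for k n
  have bd: "n \<ge> 1 \<Longrightarrow> bounded (range (\<lambda>x. G n x - birkhoff_sum \<phi> (Gk k) n x))" for k n
    using diff_bounded bG bK by blast
  have nn: "\<forall>k. eventually (\<lambda>n. 0 \<le> b k n) sequentially"
  proof
    fix k show "eventually (\<lambda>n. 0 \<le> b k n) sequentially"
      using eventually_ge_at_top[of "1::nat"]
      by eventually_elim (simp add: b_def sn_nonneg[OF bd])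
  qed
  have eq: "n \<ge> 1 \<Longrightarrow> b k n \<le> \<delta> \<longleftrightarrow> (\<forall>x. \<bar>G n x - birkhoff_sum \<phi> (Gk k) n x\<bar> \<le> \<delta> * real n)" for k n \<delta>
    unfolding b_def using sn_le_iff[OF bd] by (simp add: divide_le_eq mult.commute)
  have e2: "eventually (\<lambda>n. b k n \<le> \<delta>) sequentially \<longleftrightarrow>
      eventually (\<lambda>n. \<forall>x. \<bar>G n x - birkhoff_sum \<phi> (Gk k) n x\<bar> \<le> \<delta> * real n) sequentially" for k \<delta>
  proof
    assume "eventually (\<lambda>n. b k n \<le> \<delta>) sequentially"
    with eventually_ge_at_top[of "1::nat"] show "eventually (\<lambda>n. \<forall>x. \<bar>G n x - birkhoff_sum \<phi> (Gk k) n x\<bar> \<le> \<delta> * real n) sequentially"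
      by eventually_elim (use eq in blast)
  next
    assume "eventually (\<lambda>n. \<forall>x. \<bar>G n x - birkhoff_sum \<phi> (Gk k) n x\<bar> \<le> \<delta> * real n) sequentially"
    with eventually_ge_at_top[of "1::nat"] show "eventually (\<lambda>n. b k n \<le> \<delta>) sequentially"
      by eventually_elim (use eq in blast)
  qed
  show ?thesis unfolding asymp_approx_def approxP_def
    using lim_limsup_iff[OF nn] unfolding b_def[symmetric] e2 by simp
qed

lemma cond5_eq: "cond5 \<phi> G \<longleftrightarrow> asymp_approx \<phi> G (\<lambda>k x. G k x / real k)"
  unfolding cond5_def asymp_approx_def bs_div ..

lemma div_bounded:
  assumes "\<forall>n\<ge>1. bounded (range (G n))"
  shows "\<forall>k. bounded (range (\<lambda>x. G k x / real k))"
proof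
  fix k show "bounded (range (\<lambda>x. G k x / real k))"
  proof (cases "k = 0")
    case True then show ?thesis by simp
  next
    case False
    then obtain B where "\<forall>x. \<bar>G k x\<bar> \<le> B" using assms bounded_range_iff by (metis less_one not_le)
    then have "\<forall>x. \<bar>G k x / real k\<bar> \<le> B / real k" using False by (simp add: divide_right_mono)
    then show ?thesis unfolding bounded_range_iff by blast
  qed
qed

lemma cond5_iff:
  assumes "\<forall>n\<ge>1. bounded (range (G n))"
  shows "cond5 \<phi> G \<longleftrightarrow> approxP \<phi> G (\<lambda>k x. G k x / real k)"
  unfolding cond5_eq using approx_iff[OF assms div_bounded[OF assms]] .

lemma abs_chain:
  fixes a b c d p q r s :: real
  assumes "\<bar>a - b\<bar> \<le> p" "\<bar>c - d\<bar> \<le> q" "\<bar>d - b\<bar> \<le> r" "r \<le> s"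
  shows "\<bar>a - c\<bar> \<le> p + q + s"
  using assms by linarith

lemma L_B:
  assumes ap: "approxP \<phi> G Gk" and bK: "\<forall>k. bounded (range (Gk k))"
  shows "approxP \<phi> G (\<lambda>k x. G k x / real k)"
  unfolding approxP_def
proof (intro allI impI)
  fix \<delta> :: real assume "\<delta> > 0"
  then have "\<delta>/4 > 0" by simp
  from ap[unfolded approxP_def, rule_format, OF this] obtain K where
    K: "\<forall>k\<ge>K. eventually (\<lambda>n. \<forall>x. \<bar>G n x - birkhoff_sum \<phi> (Gk k) n x\<bar> \<le> \<delta>/4 * real n) sequentially"
    unfolding eventually_sequentially by blast
  define g where "g = Gk K"
  obtain B where B: "\<forall>x. \<bar>g x\<bar> \<le> B" using bK bounded_range_iff g_def by blast
  obtain N0 where N0: "\<forall>n\<ge>N0. \<forall>x. \<bar>G n x - birkhoff_sum \<phi> g n x\<bar> \<le> \<delta>/4 * real n"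
    using K[rule_format, of K] unfolding g_def eventually_sequentially by blast
  show "eventually (\<lambda>k. eventually (\<lambda>n. \<forall>x. \<bar>G n x - birkhoff_sum \<phi> (\<lambda>x. G k x / real k) n x\<bar> \<le> \<delta> * real n) sequentially) sequentially"
  proof (rule eventually_sequentiallyI[of "max N0 1"])
    fix k assume k: "max N0 1 \<le> k"
    then have k1: "k \<ge> 1" and kN: "k \<ge> N0" by auto
    have c1: "\<forall>y. \<bar>G k y / real k - birkhoff_sum \<phi> g k y / real k\<bar> \<le> \<delta>/4"
    proof
      fix y
      have "\<bar>G k y - birkhoff_sum \<phi> g k y\<bar> \<le> \<delta>/4 * real k" using N0 kN by blast
      then have "\<bar>G k y - birkhoff_sum \<phi> g k y\<bar> / real k \<le> \<delta>/4" using k1 by (simp add: divide_le_eq)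
      then show "\<bar>G k y / real k - birkhoff_sum \<phi> g k y / real k\<bar> \<le> \<delta>/4"
        by (simp add: diff_divide_distrib[symmetric])
    qed
    obtain N1 :: nat where N1: "real N1 \<ge> 4 * real k * B / \<delta>" using real_arch_simple by blast
    show "eventually (\<lambda>n. \<forall>x. \<bar>G n x - birkhoff_sum \<phi> (\<lambda>x. G k x / real k) n x\<bar> \<le> \<delta> * real n) sequentially"
    proof (rule eventually_sequentiallyI[of "max N0 N1"], rule allI)
      fix n x assume n: "max N0 N1 \<le> n"
      have a: "\<bar>G n x - birkhoff_sum \<phi> g n x\<bar> \<le> \<delta>/4 * real n" using N0 n by auto
      have b: "\<bar>birkhoff_sum \<phi> (\<lambda>x. G k x / real k) n x - birkhoff_sum \<phi> (\<lambda>y. birkhoff_sum \<phi> g k y / real k) n x\<bar> \<le> real n * (\<delta>/4)"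
        by (rule bs_diff) (use c1 in simp)
      have sabs: "\<bar>\<Sum>j<k. birkhoff_sum \<phi> g n ((\<phi>^^j) x) - birkhoff_sum \<phi> g n x\<bar> \<le> (\<Sum>j<k. 2 * real k * B)"
      proof -
        have "\<bar>\<Sum>j<k. birkhoff_sum \<phi> g n ((\<phi>^^j) x) - birkhoff_sum \<phi> g n x\<bar>
            \<le> (\<Sum>j<k. \<bar>birkhoff_sum \<phi> g n ((\<phi>^^j) x) - birkhoff_sum \<phi> g n x\<bar>)" by (rule sum_abs)
        also have "\<dots> \<le> (\<Sum>j<k. 2 * real k * B)"
        proof (rule sum_mono)
          fix j assume "j \<in> {..<k}"
          then have "real j \<le> real k" by simp
          moreover have "B \<ge> 0" using B by (meson abs_ge_zero order_trans)
          ultimately have "2 * real j * B \<le> 2 * real k * B" by (simp add: mult_right_mono)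
          then show "\<bar>birkhoff_sum \<phi> g n ((\<phi>^^j) x) - birkhoff_sum \<phi> g n x\<bar> \<le> 2 * real k * B"
            using bs_shift[OF B, of \<phi> n j x] by linarith
        qed
        finally show ?thesis .
      qed
      have c: "\<bar>birkhoff_sum \<phi> (\<lambda>y. birkhoff_sum \<phi> g k y / real k) n x - birkhoff_sum \<phi> g n x\<bar> \<le> 2 * real k * B"
      proof -
        have e: "birkhoff_sum \<phi> (\<lambda>y. birkhoff_sum \<phi> g k y / real k) n x - birkhoff_sum \<phi> g n x
          = (\<Sum>j<k. birkhoff_sum \<phi> g n ((\<phi>^^j) x) - birkhoff_sum \<phi> g n x) / real k"
          using k1 by (simp add: bs_div bs_double sum_subtractf diff_divide_distrib)
        have "\<bar>(\<Sum>j<k. birkhoff_sum \<phi> g n ((\<phi>^^j) x) - birkhoff_sum \<phi> g n x)\<bar> / real k \<le> 2 * real k * B"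
          using sabs k1 by (simp add: pos_divide_le_eq mult_ac)
        then show ?thesis unfolding e by simp
      qed
      have d: "2 * real k * B \<le> \<delta>/2 * real n"
      proof -
        have "real N1 \<le> real n" using n by simp
        with N1 have "4 * real k * B / \<delta> \<le> real n" by linarith
        then have "4 * real k * B \<le> real n * \<delta>" using \<open>\<delta> > 0\<close> by (simp add: divide_le_eq)
        then show ?thesis by (simp add: mult_ac)
      qed
      show "\<bar>G n x - birkhoff_sum \<phi> (\<lambda>x. G k x / real k) n x\<bar> \<le> \<delta> * real n"
        using abs_chain[OF a b c d] by (simp add: algebra_simps)
    qed
  qed
qed

lemma bowen_dist:
  assumes "y \<in> bowen_ball \<phi> n x \<epsilon>" "z \<in> bowen_ball \<phi> n x \<epsilon>" "j < n"
  shows "dist ((\<phi>^^j) y) ((\<phi>^^j) z) < 2 * \<epsilon>"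
proof -
  have "dist ((\<phi>^^j) y) ((\<phi>^^j) x) < \<epsilon>" "dist ((\<phi>^^j) z) ((\<phi>^^j) x) < \<epsilon>"
    using assms unfolding bowen_ball_def by auto
  then show ?thesis using dist_triangle2[of "(\<phi>^^j) y" "(\<phi>^^j) z" "(\<phi>^^j) x"] by linarith
qed

lemma TVS:
  fixes g :: "'a::metric_space \<Rightarrow> real"
  assumes cpt: "compact (UNIV::'a set)" and cg: "continuous_on UNIV g" and "\<delta> > 0"
  shows "osc_ev \<phi> (\<lambda>n. birkhoff_sum \<phi> g n) \<delta>"
proof -
  have "uniformly_continuous_on UNIV g" by (rule compact_uniformly_continuous[OF cg cpt])
  then obtain d where d: "d > 0" "\<forall>x x'. dist x' x < d \<longrightarrow> dist (g x') (g x) < \<delta>"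
    unfolding uniformly_continuous_on_def using \<open>\<delta> > 0\<close> by blast
  have "\<bar>birkhoff_sum \<phi> g n y - birkhoff_sum \<phi> g n z\<bar> \<le> \<delta> * real n"
    if "y \<in> bowen_ball \<phi> n x (d/2)" "z \<in> bowen_ball \<phi> n x (d/2)" for n x y z
  proof -
    have "\<bar>birkhoff_sum \<phi> g n y - birkhoff_sum \<phi> g n z\<bar> \<le> (\<Sum>j<n. \<bar>g ((\<phi>^^j) y) - g ((\<phi>^^j) z)\<bar>)"
      unfolding birkhoff_sum_def sum_subtractf[symmetric] by (rule sum_abs)
    also have "\<dots> \<le> (\<Sum>j<n. \<delta>)"
    proof (rule sum_mono)
      fix j assume "j \<in> {..<n}"
      then have "dist ((\<phi>^^j) y) ((\<phi>^^j) z) < 2 * (d/2)" using bowen_dist[OF that] by blast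
      then have "dist ((\<phi>^^j) y) ((\<phi>^^j) z) < d" by simp
      then have "dist (g ((\<phi>^^j) y)) (g ((\<phi>^^j) z)) < \<delta>" using d(2) by blast
      then show "\<bar>g ((\<phi>^^j) y) - g ((\<phi>^^j) z)\<bar> \<le> \<delta>" by (simp add: dist_real_def)
    qed
    finally show ?thesis by (simp add: mult.commute)
  qed
  then show ?thesis unfolding osc_ev_def using d(1)
    by (intro exI[of _ "d/2"]) (auto intro: always_eventually)
qed

lemma osc_transfer:
  assumes "osc_ev \<phi> H \<delta>" "eventually (\<lambda>n. \<forall>x. \<bar>G n x - H n x\<bar> \<le> \<eta> * real n) sequentially"
  shows "osc_ev \<phi> G (\<delta> + 2 * \<eta>)"
proof -
  obtain \<epsilon> where e: "\<epsilon> > 0" "eventually (\<lambda>n. \<forall>x y z. y \<in> bowen_ball \<phi> n x \<epsilon> \<longrightarrow>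
       z \<in> bowen_ball \<phi> n x \<epsilon> \<longrightarrow> \<bar>H n y - H n z\<bar> \<le> \<delta> * real n) sequentially"
    using assms(1) unfolding osc_ev_def by blast
  have "eventually (\<lambda>n. \<forall>x y z. y \<in> bowen_ball \<phi> n x \<epsilon> \<longrightarrow>
       z \<in> bowen_ball \<phi> n x \<epsilon> \<longrightarrow> \<bar>G n y - G n z\<bar> \<le> (\<delta> + 2 * \<eta>) * real n) sequentially"
    using e(2) assms(2)
  proof eventually_elim
    case (elim n)
    show ?case
    proof (intro allI impI)
      fix x y z assume "y \<in> bowen_ball \<phi> n x \<epsilon>" "z \<in> bowen_ball \<phi> n x \<epsilon>"
      then have "\<bar>H n y - H n z\<bar> \<le> \<delta> * real n" using elim(1) by blast
      moreover have "\<bar>G n y - H n y\<bar> \<le> \<eta> * real n" "\<bar>G n z - H n z\<bar> \<le> \<eta> * real n" using elim(2) by auto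
      ultimately have "\<bar>G n y - G n z\<bar> \<le> \<delta> * real n + \<eta> * real n + \<eta> * real n"
        by linarith
      then show "\<bar>G n y - G n z\<bar> \<le> (\<delta> + 2 * \<eta>) * real n"
        by (simp add: algebra_simps)
    qed
  qed
  then show ?thesis unfolding osc_ev_def using e(1) by blast
qed

lemma L_A:
  fixes \<phi> :: "'a::metric_space \<Rightarrow> 'a"
  assumes cpt: "compact (UNIV::'a set)" and ap: "approxP \<phi> G Gk"
    and cK: "\<forall>k. continuous_on UNIV (Gk k)"
  shows "\<forall>\<delta>>0. osc_ev \<phi> G \<delta>"
proof (intro allI impI)
  fix \<delta> :: real assume "\<delta> > 0"
  then have "\<delta>/3 > 0" by simp
  from ap[unfolded approxP_def, rule_format, OF this] obtain K where
    K: "\<forall>k\<ge>K. eventually (\<lambda>n. \<forall>x. \<bar>G n x - birkhoff_sum \<phi> (Gk k) n x\<bar> \<le> \<delta>/3 * real n) sequentially"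
    unfolding eventually_sequentially by blast
  have "osc_ev \<phi> (\<lambda>n. birkhoff_sum \<phi> (Gk K) n) (\<delta>/3)" using TVS[OF cpt cK[rule_format, of K] \<open>\<delta>/3 > 0\<close>] .
  from osc_transfer[OF this K[rule_format, of K]] show "osc_ev \<phi> G \<delta>" by simp
qed

lemma L_8b:
  assumes ap: "approxP \<phi> G Gk"
    and Lk: "\<forall>k. ((\<lambda>\<epsilon>. limsup (\<lambda>n. var_n \<phi> (\<lambda>m. birkhoff_sum \<phi> (Gk k) m) n \<epsilon>)) \<longlongrightarrow> L k) (at_right 0)"
    and L0: "L \<longlonglongrightarrow> 0"
  shows "\<forall>\<delta>>0. osc_ev \<phi> G \<delta>"
proof (intro allI impI)
  fix \<delta> :: real assume "\<delta> > 0"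
  then have d3: "\<delta>/3 > 0" by simp
  have "eventually (\<lambda>k. L k < ereal (\<delta>/3)) sequentially"
    using order_tendstoD(2)[OF L0] d3 by simp
  moreover have "eventually (\<lambda>k. eventually (\<lambda>n. \<forall>x. \<bar>G n x - birkhoff_sum \<phi> (Gk k) n x\<bar> \<le> \<delta>/3 * real n) sequentially) sequentially"
    using ap[unfolded approxP_def, rule_format, OF d3] .
  ultimately have "eventually (\<lambda>k. L k < ereal (\<delta>/3) \<and> eventually (\<lambda>n. \<forall>x. \<bar>G n x - birkhoff_sum \<phi> (Gk k) n x\<bar> \<le> \<delta>/3 * real n) sequentially) sequentially"
    by (rule eventually_conj)
  then obtain k where k: "L k < ereal (\<delta>/3)" "eventually (\<lambda>n. \<forall>x. \<bar>G n x - birkhoff_sum \<phi> (Gk k) n x\<bar> \<le> \<delta>/3 * real n) sequentially"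
    unfolding eventually_sequentially by blast
  have "osc_ev \<phi> (\<lambda>m. birkhoff_sum \<phi> (Gk k) m) (\<delta>/3)" by (rule lim_var_osc[OF Lk[rule_format] k(1)])
  from osc_transfer[OF this k(2)] show "osc_ev \<phi> G \<delta>" by simp
qed

lemma cont_funpow:
  fixes \<phi> :: "'a::topological_space \<Rightarrow> 'a"
  assumes "continuous_on UNIV \<phi>" shows "continuous_on UNIV (\<phi>^^j)"
proof (induction j)
  case 0 have "(\<phi>^^0) = (\<lambda>x. x)" by (simp add: id_def)
  then show ?case by (simp add: continuous_on_id)
next
  case (Suc j)
  have "continuous_on (range (\<phi>^^j)) \<phi>" using assms by (rule continuous_on_subset) simp
  from continuous_on_compose[OF Suc this] show ?case by simp
qed

lemma unif_phi:
  fixes \<phi> :: "'a::metric_space \<Rightarrow> 'a"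
  assumes cpt: "compact (UNIV::'a set)" and cphi: "continuous_on UNIV \<phi>" and e: "\<epsilon> > 0"
  shows "\<exists>r>0. \<forall>x y. dist y x < r \<longrightarrow> (\<forall>j<k. dist ((\<phi>^^j) y) ((\<phi>^^j) x) < \<epsilon>)"
proof (induction k)
  case 0 then show ?case by (intro exI[of _ 1]) auto
next
  case (Suc k)
  then obtain r1 where r1: "r1 > 0" "\<forall>x y. dist y x < r1 \<longrightarrow> (\<forall>j<k. dist ((\<phi>^^j) y) ((\<phi>^^j) x) < \<epsilon>)"
    by blast
  have "uniformly_continuous_on UNIV (\<phi>^^k)"
    by (rule compact_uniformly_continuous[OF cont_funpow[OF cphi] cpt])
  then obtain d where d: "d > 0" "\<forall>x x'. dist x' x < d \<longrightarrow> dist ((\<phi>^^k) x') ((\<phi>^^k) x) < \<epsilon>"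
    unfolding uniformly_continuous_on_def using e by blast
  show ?case
  proof (intro exI[of _ "min r1 d"] conjI allI impI)
    show "0 < min r1 d" using r1 d by simp
    fix x y :: 'a and j assume "dist y x < min r1 d" "j < Suc k"
    then show "dist ((\<phi>^^j) y) ((\<phi>^^j) x) < \<epsilon>"
      using r1(2) d(2) by (auto simp: less_Suc_eq)
  qed
qed

lemma lip_approx:
  fixes f :: "'a::metric_space \<Rightarrow> real"
  assumes B: "\<forall>x. \<bar>f x\<bar> \<le> B" and r: "r > 0" and osc: "\<forall>x y. dist y x < r \<longrightarrow> \<bar>f y - f x\<bar> \<le> \<eta>"
  shows "\<exists>F. continuous_on UNIV F \<and> (\<forall>x. \<bar>F x - f x\<bar> \<le> \<eta>)"
proof -
  have B0: "B \<ge> 0" using B by (meson abs_ge_zero order_trans)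
  have eta0: "\<eta> \<ge> 0" using osc[rule_format, of undefined undefined] r by simp
  define L where "L = (2*B+1)/r"
  have L0: "L > 0" using B0 r by (simp add: L_def)
  have Lr: "L * r = 2*B+1" using r by (simp add: L_def)
  define F where "F x = (INF y. f y + L * dist x y)" for x
  have bdd: "bdd_below (range (\<lambda>y. f y + L * dist x y))" for x
  proof (rule bdd_belowI2[of _ "-B"])
    fix y have "-B \<le> f y" using B[rule_format, of y] by linarith
    moreover have "0 \<le> L * dist x y" using L0 by simp
    ultimately show "-B \<le> f y + L * dist x y" by linarith
  qed
  have up: "F x \<le> f y + L * dist x y" for x y
    unfolding F_def using cINF_lower[OF bdd, of y x] by simp
  have Fle: "F x \<le> f x" for x using up[of x x] by simp
  have Fge: "f x - \<eta> \<le> F x" for x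
    unfolding F_def
  proof (rule cINF_greatest)
    show "UNIV \<noteq> {}" by simp
    fix y
    show "f x - \<eta> \<le> f y + L * dist x y"
    proof (cases "dist y x < r")
      case True
      then have "\<bar>f y - f x\<bar> \<le> \<eta>" using osc by blast
      moreover have "0 \<le> L * dist x y" using L0 by simp
      ultimately show ?thesis by linarith
    next
      case False
      then have "r \<le> dist x y" by (simp add: dist_commute)
      then have "L * r \<le> L * dist x y" using L0 by simp
      then have "2*B+1 \<le> L * dist x y" using Lr by simp
      moreover have "f x \<le> B" "-B \<le> f y" using B[rule_format, of x] B[rule_format, of y] by linarith+
      ultimately show ?thesis using eta0 by linarith
    qed
  qed
  have lip: "F x \<le> F x' + L * dist x x'" for x x'
  proof -
    have "F x - L * dist x x' \<le> F x'"
      unfolding F_def[of x']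
    proof (rule cINF_greatest)
      show "UNIV \<noteq> {}" by simp
      fix y
      have "dist x y \<le> dist x x' + dist x' y" by (rule dist_triangle)
      then have "L * dist x y \<le> L * dist x x' + L * dist x' y" using L0
        by (metis distrib_left mult_left_mono less_imp_le)
      then show "F x - L * dist x x' \<le> f y + L * dist x' y" using up[of x y] by linarith
    qed
    then show ?thesis by linarith
  qed
  have "continuous_on UNIV F"
    unfolding continuous_on_iff
  proof (intro ballI allI impI)
    fix x :: 'a and e :: real assume "e > 0"
    show "\<exists>d>0. \<forall>x'\<in>UNIV. dist x' x < d \<longrightarrow> dist (F x') (F x) < e"
    proof (intro exI[of _ "e / L"] conjI ballI impI)
      show "0 < e / L" using \<open>e > 0\<close> L0 by simp
      fix x' assume "dist x' x < e / L"
      then have "L * dist x' x < e" using L0 by (simp add: less_divide_eq mult.commute)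
      moreover have "F x' \<le> F x + L * dist x' x" "F x \<le> F x' + L * dist x' x"
        using lip[of x' x] lip[of x x'] by (auto simp: dist_commute)
      ultimately show "dist (F x') (F x) < e" unfolding dist_real_def by linarith
    qed
  qed
  moreover have "\<forall>x. \<bar>F x - f x\<bar> \<le> \<eta>"
  proof
    fix x show "\<bar>F x - f x\<bar> \<le> \<eta>" using Fle[of x] Fge[of x] eta0 by linarith
  qed
  ultimately show ?thesis by blast
qed

lemma L_C1:
  fixes \<phi> :: "'a::metric_space \<Rightarrow> 'a" and G :: "nat \<Rightarrow> 'a \<Rightarrow> real"
  assumes cpt: "compact (UNIV::'a set)" and cphi: "continuous_on UNIV \<phi>"
    and bG: "\<forall>n\<ge>1. bounded (range (G n))" and tv: "\<forall>\<delta>>0. osc_ev \<phi> G \<delta>"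
    and c5: "approxP \<phi> G (\<lambda>k x. G k x / real k)" and d: "\<delta> > 0"
  shows "\<exists>F. continuous_on UNIV F \<and> eventually (\<lambda>n. \<forall>x. \<bar>G n x - birkhoff_sum \<phi> F n x\<bar> \<le> \<delta> * real n) sequentially"
proof -
  have d3: "\<delta>/3 > 0" using d by simp
  obtain \<epsilon> where e: "\<epsilon> > 0" and ev1: "eventually (\<lambda>n. \<forall>x y z. y \<in> bowen_ball \<phi> n x \<epsilon> \<longrightarrow>
       z \<in> bowen_ball \<phi> n x \<epsilon> \<longrightarrow> \<bar>G n y - G n z\<bar> \<le> \<delta>/3 * real n) sequentially"
    using tv d3 unfolding osc_ev_def by blast
  have ev2: "eventually (\<lambda>k. eventually (\<lambda>n. \<forall>x. \<bar>G n x - birkhoff_sum \<phi> (\<lambda>x. G k x / real k) n x\<bar> \<le> \<delta>/3 * real n) sequentially) sequentially"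
    using c5 d3 unfolding approxP_def by blast
  have "eventually (\<lambda>k. (\<forall>x y z. y \<in> bowen_ball \<phi> k x \<epsilon> \<longrightarrow>
       z \<in> bowen_ball \<phi> k x \<epsilon> \<longrightarrow> \<bar>G k y - G k z\<bar> \<le> \<delta>/3 * real k) \<and>
       eventually (\<lambda>n. \<forall>x. \<bar>G n x - birkhoff_sum \<phi> (\<lambda>x. G k x / real k) n x\<bar> \<le> \<delta>/3 * real n) sequentially
       \<and> k \<ge> 1) sequentially"
    using ev1 ev2 eventually_ge_at_top[of "1::nat"] by (intro eventually_conj)
  then obtain k where k1: "\<forall>x y z. y \<in> bowen_ball \<phi> k x \<epsilon> \<longrightarrow>
       z \<in> bowen_ball \<phi> k x \<epsilon> \<longrightarrow> \<bar>G k y - G k z\<bar> \<le> \<delta>/3 * real k"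
    and k2: "eventually (\<lambda>n. \<forall>x. \<bar>G n x - birkhoff_sum \<phi> (\<lambda>x. G k x / real k) n x\<bar> \<le> \<delta>/3 * real n) sequentially"
    and k3: "k \<ge> 1"
    unfolding eventually_sequentially by blast
  define f where "f x = G k x / real k" for x
  obtain B where B: "\<forall>x. \<bar>G k x\<bar> \<le> B" using bG k3 bounded_range_iff by blast
  have fB: "\<forall>x. \<bar>f x\<bar> \<le> B / real k"
    using B k3 by (simp add: f_def divide_right_mono)
  obtain r where r: "r > 0" "\<forall>x y. dist y x < r \<longrightarrow> (\<forall>j<k. dist ((\<phi>^^j) y) ((\<phi>^^j) x) < \<epsilon>)"
    using unif_phi[OF cpt cphi e, of k] by blast
  have osc: "\<forall>x y. dist y x < r \<longrightarrow> \<bar>f y - f x\<bar> \<le> \<delta>/3"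
  proof (intro allI impI)
    fix x y :: 'a assume "dist y x < r"
    then have "y \<in> bowen_ball \<phi> k x \<epsilon>" using r(2) unfolding bowen_ball_def by blast
    moreover have "x \<in> bowen_ball \<phi> k x \<epsilon>" using bowen_self[OF e] .
    ultimately have "\<bar>G k y - G k x\<bar> \<le> \<delta>/3 * real k" using k1 by blast
    then have "\<bar>G k y - G k x\<bar> / real k \<le> \<delta>/3" using k3 by (simp add: divide_le_eq)
    then show "\<bar>f y - f x\<bar> \<le> \<delta>/3" unfolding f_def by (simp add: diff_divide_distrib[symmetric])
  qed
  obtain F where F: "continuous_on UNIV F" "\<forall>x. \<bar>F x - f x\<bar> \<le> \<delta>/3"
    using lip_approx[OF fB r(1) osc] by blast
  have "eventually (\<lambda>n. \<forall>x. \<bar>G n x - birkhoff_sum \<phi> F n x\<bar> \<le> \<delta> * real n) sequentially"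
    using k2
  proof (rule eventually_mono, intro allI)
    fix n x assume a: "\<forall>x. \<bar>G n x - birkhoff_sum \<phi> (\<lambda>x. G k x / real k) n x\<bar> \<le> \<delta>/3 * real n"
    have "\<bar>birkhoff_sum \<phi> f n x - birkhoff_sum \<phi> F n x\<bar> \<le> real n * (\<delta>/3)"
      by (rule bs_diff) (use F(2) in \<open>simp add: abs_minus_commute\<close>)
    moreover have "\<bar>G n x - birkhoff_sum \<phi> f n x\<bar> \<le> \<delta>/3 * real n" using a unfolding f_def by blast
    moreover have "0 \<le> \<delta>/3 * real n" using d by simp
    moreover have "\<delta>/3 * real n = (\<delta> * real n)/3" "real n * (\<delta>/3) = (\<delta> * real n)/3" by simp_all
    ultimately show "\<bar>G n x - birkhoff_sum \<phi> F n x\<bar> \<le> \<delta> * real n" by linarith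
  qed
  with F(1) show ?thesis by blast
qed

lemma L_C:
  fixes \<phi> :: "'a::metric_space \<Rightarrow> 'a" and G :: "nat \<Rightarrow> 'a \<Rightarrow> real"
  assumes cpt: "compact (UNIV::'a set)" and cphi: "continuous_on UNIV \<phi>"
    and bG: "\<forall>n\<ge>1. bounded (range (G n))" and tv: "\<forall>\<delta>>0. osc_ev \<phi> G \<delta>"
    and c5: "approxP \<phi> G (\<lambda>k x. G k x / real k)"
  shows "\<exists>Gk. (\<forall>k. continuous_on UNIV (Gk k)) \<and> approxP \<phi> G Gk"
proof -
  have "\<forall>j. \<exists>F. continuous_on UNIV F \<and> eventually (\<lambda>n. \<forall>x. \<bar>G n x - birkhoff_sum \<phi> F n x\<bar> \<le> inverse (real (Suc j)) * real n) sequentially"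
    using L_C1[OF cpt cphi bG tv c5] by simp
  from choice[OF this] obtain Gk where Gk: "\<forall>j. continuous_on UNIV (Gk j) \<and> eventually (\<lambda>n. \<forall>x. \<bar>G n x - birkhoff_sum \<phi> (Gk j) n x\<bar> \<le> inverse (real (Suc j)) * real n) sequentially"
    by blast
  have "approxP \<phi> G Gk"
    unfolding approxP_def
  proof (intro allI impI)
    fix \<delta> :: real assume "\<delta> > 0"
    then obtain J where J: "inverse (real (Suc J)) < \<delta>" using reals_Archimedean[OF \<open>\<delta> > 0\<close>] by blast
    show "eventually (\<lambda>k. eventually (\<lambda>n. \<forall>x. \<bar>G n x - birkhoff_sum \<phi> (Gk k) n x\<bar> \<le> \<delta> * real n) sequentially) sequentially"
    proof (rule eventually_sequentiallyI[of J])
      fix k assume "J \<le> k"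
      then have "inverse (real (Suc k)) \<le> inverse (real (Suc J))" by (simp add: le_imp_inverse_le)
      with J have ik: "inverse (real (Suc k)) \<le> \<delta>" by linarith
      show "eventually (\<lambda>n. \<forall>x. \<bar>G n x - birkhoff_sum \<phi> (Gk k) n x\<bar> \<le> \<delta> * real n) sequentially"
        using Gk[rule_format, of k]
      proof (elim conjE eventually_mono, intro allI)
        fix n x assume "\<forall>x. \<bar>G n x - birkhoff_sum \<phi> (Gk k) n x\<bar> \<le> inverse (real (Suc k)) * real n"
        moreover have "inverse (real (Suc k)) * real n \<le> \<delta> * real n" using ik by (simp add: mult_right_mono)
        ultimately show "\<bar>G n x - birkhoff_sum \<phi> (Gk k) n x\<bar> \<le> \<delta> * real n" by (meson order_trans)
      qed
    qed
  qed
  with Gk show ?thesis by blast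
qed

lemma L_E:
  assumes "\<forall>n\<ge>1. continuous_on UNIV (G n)"
  shows "\<forall>k. continuous_on UNIV (\<lambda>x. G k x / real k)"
proof
  fix k show "continuous_on UNIV (\<lambda>x. G k x / real k)"
  proof (cases "k = 0")
    case True then show ?thesis by (simp add: continuous_on_const)
  next
    case False
    then have "continuous_on UNIV (G k)" using assms by simp
    then show ?thesis using False by (intro continuous_intros) auto
  qed
qed

lemma fp: "(f^^a) ((f^^b) y) = (f^^(a+b)) y"
  by (simp add: funpow_add)

lemma sum_lessThan_add': "(\<Sum>m<a+b. h m) = (\<Sum>m<a. h m) + (\<Sum>i<b. h (a+i))"
  for h :: "nat \<Rightarrow> real"
  by (induction b) (simp_all add: add.assoc)

lemma sum_group: "(\<Sum>i<k. \<Sum>j<q. h (j*k+i)) = (\<Sum>m<q*k. h m)"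
  for h :: "nat \<Rightarrow> real"
proof -
  have "(\<Sum>j<q. \<Sum>i<k. h (j*k+i)) = (\<Sum>m<q*k. h m)"
  proof (induction q)
    case 0 then show ?case by simp
  next
    case (Suc q)
    have e: "Suc q * k = q*k + k" by simp
    have "(\<Sum>m<Suc q * k. h m) = (\<Sum>m<q*k. h m) + (\<Sum>i<k. h (q*k+i))"
      unfolding e by (rule sum_lessThan_add')
    then show ?case using Suc by simp
  qed
  then show ?thesis by (subst sum.swap) simp
qed

lemma waa_PQ:
  fixes G :: "nat \<Rightarrow> 'a \<Rightarrow> real"
  assumes W: "\<forall>m\<ge>1. \<forall>n\<ge>1. \<forall>x. - C m + G m x + G n ((\<phi>^^m) x) \<le> G (m+n) x \<and>
        G (m+n) x \<le> C m + G m x + G n ((\<phi>^^m) x)"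
    and k: "k \<ge> 1"
  shows "\<forall>y r. r \<ge> 1 \<longrightarrow> \<bar>G (q*k + r) y - (\<Sum>j<q. G k ((\<phi>^^(j*k)) y)) - G r ((\<phi>^^(q*k)) y)\<bar> \<le> real q * C k"
proof (induction q)
  case 0 then show ?case by simp
next
  case (Suc q)
  show ?case
  proof (intro allI impI)
    fix y r assume r: "(r::nat) \<ge> 1"
    define n' where "n' = q*k + r"
    have n'1: "n' \<ge> 1" using r by (simp add: n'_def)
    have eqn: "Suc q * k + r = k + n'" by (simp add: n'_def)
    have w: "\<bar>G (k + n') y - G k y - G n' ((\<phi>^^k) y)\<bar> \<le> C k"
      using W[rule_format, OF k n'1, of y] by linarith
    have ih: "\<bar>G n' ((\<phi>^^k) y) - (\<Sum>j<q. G k ((\<phi>^^(j*k)) ((\<phi>^^k) y))) - G r ((\<phi>^^(q*k)) ((\<phi>^^k) y))\<bar> \<le> real q * C k"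
      using Suc.IH r unfolding n'_def by blast
    have s: "(\<Sum>j<Suc q. G k ((\<phi>^^(j*k)) y)) = G k y + (\<Sum>j<q. G k ((\<phi>^^(j*k)) ((\<phi>^^k) y)))"
      by (subst sum.lessThan_Suc_shift) (simp add: fp add.commute)
    have t: "(\<phi>^^(q*k)) ((\<phi>^^k) y) = (\<phi>^^(Suc q * k)) y" by (simp add: fp add.commute)
    show "\<bar>G (Suc q * k + r) y - (\<Sum>j<Suc q. G k ((\<phi>^^(j*k)) y)) - G r ((\<phi>^^(Suc q * k)) y)\<bar> \<le> real (Suc q) * C k"
      unfolding eqn s t[symmetric] using w ih by (simp add: algebra_simps)
  qed
qed

lemma waa_step:
  fixes G :: "nat \<Rightarrow> 'a \<Rightarrow> real"
  assumes W: "\<forall>m\<ge>1. \<forall>n\<ge>1. \<forall>x. - C m + G m x + G n ((\<phi>^^m) x) \<le> G (m+n) x \<and>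
        G (m+n) x \<le> C m + G m x + G n ((\<phi>^^m) x)"
    and k: "k \<ge> 1" and i: "i < k" and nk: "3*k \<le> n" and q: "q = n div k - 2"
    and Mb: "\<forall>m. 1 \<le> m \<longrightarrow> m \<le> 3*k \<longrightarrow> (\<forall>x. \<bar>G m x\<bar> \<le> M)"
    and Db: "C (i+1) \<le> D"
  shows "\<bar>G n x - (\<Sum>j<q. G k ((\<phi>^^(j*k)) ((\<phi>^^(i+1)) x)))\<bar> \<le> D + real q * C k + 2*M"
proof -
  define d where "d = n div k"
  have e1: "d*k + n mod k = n" using div_mult_mod_eq[of n k] unfolding d_def by simp
  have e2: "n mod k < k" using k by simp
  have dk: "d*k \<le> n" "n < d*k + k" using e1 e2 by linarith+
  have d3: "d \<ge> 3"
  proof (rule ccontr)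
    assume "\<not> d \<ge> 3" then have "d \<le> 2" by simp
    then have "d*k \<le> 2*k" by simp
    then show False using dk nk by linarith
  qed
  have qk: "q*k + 2*k = d*k"
  proof -
    have "q + 2 = d" unfolding q d_def[symmetric] using d3 by simp
    then have "(q + 2)*k = d*k" by simp
    then show ?thesis by (simp add: add_mult_distrib)
  qed
  define r where "r = n - (i+1) - q*k"
  have r1: "r \<ge> 1" "r \<le> 3*k" unfolding r_def using qk dk i by linarith+
  have nr: "n = (i+1) + (q*k + r)" unfolding r_def using qk dk i by linarith
  have qr1: "q*k + r \<ge> 1" using r1 by simp
  have w: "\<bar>G n x - G (i+1) x - G (q*k+r) ((\<phi>^^(i+1)) x)\<bar> \<le> C (i+1)"
    using W[rule_format, of "i+1" "q*k+r" x] qr1 nr by (simp add: abs_le_iff)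
  have pq: "\<bar>G (q*k + r) ((\<phi>^^(i+1)) x) - (\<Sum>j<q. G k ((\<phi>^^(j*k)) ((\<phi>^^(i+1)) x))) - G r ((\<phi>^^(q*k)) ((\<phi>^^(i+1)) x))\<bar> \<le> real q * C k"
    using waa_PQ[OF W k, of q] r1 by blast
  have m1: "\<bar>G (i+1) x\<bar> \<le> M" using Mb i by simp
  have m2: "\<bar>G r ((\<phi>^^(q*k)) ((\<phi>^^(i+1)) x))\<bar> \<le> M" using Mb r1 by blast
  show ?thesis using w pq m1 m2 Db by linarith
qed

lemma q_facts:
  fixes k n q :: nat
  assumes k: "k \<ge> 1" and nk: "3*k \<le> n" and q: "q = n div k - 2"
  shows "q*k + 2*k \<le> n" "n < q*k + 3*k"
proof -
  define d where "d = n div k"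
  have e1: "d*k + n mod k = n" using div_mult_mod_eq[of n k] unfolding d_def by simp
  have e2: "n mod k < k" using k by simp
  have dk: "d*k \<le> n" "n < d*k + k" using e1 e2 by linarith+
  have d3: "d \<ge> 3"
  proof (rule ccontr)
    assume "\<not> d \<ge> 3" then have "d \<le> 2" by simp
    then have "d*k \<le> 2*k" by simp
    then show False using dk nk by linarith
  qed
  have "q + 2 = d" unfolding q d_def[symmetric] using d3 by simp
  then have "(q + 2)*k = d*k" by simp
  then have qk: "q*k + 2*k = d*k" by (simp add: add_mult_distrib)
  show "q*k + 2*k \<le> n" "n < q*k + 3*k" using qk dk by linarith+
qed

lemma L_D:
  fixes \<phi> :: "'a \<Rightarrow> 'a" and G :: "nat \<Rightarrow> 'a \<Rightarrow> real"
  assumes bG: "\<forall>n\<ge>1. bounded (range (G n))" and waa: "weakly_almost_additive \<phi> G"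
  shows "approxP \<phi> G (\<lambda>k x. G k x / real k)"
proof -
  obtain C where Clim: "(\<lambda>n. C n / real n) \<longlonglongrightarrow> 0" and W: "\<forall>m\<ge>1. \<forall>n\<ge>1. \<forall>x. - C m + G m x + G n ((\<phi>^^m) x) \<le> G (m+n) x \<and>
        G (m+n) x \<le> C m + G m x + G n ((\<phi>^^m) x)"
    using waa unfolding weakly_almost_additive_def by blast
  have C0: "0 \<le> C k" if "k \<ge> 1" for k using W[rule_format, of k 1 undefined] that by linarith
  have "\<forall>n. \<exists>B. n \<ge> 1 \<longrightarrow> (\<forall>x. \<bar>G n x\<bar> \<le> B)" using bG bounded_range_iff by blast
  from choice[OF this] obtain Bf where Bf: "\<forall>n. n \<ge> 1 \<longrightarrow> (\<forall>x. \<bar>G n x\<bar> \<le> Bf n)" by blast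
  show ?thesis unfolding approxP_def
  proof (intro allI impI)
    fix \<delta> :: real assume dpos: "\<delta> > 0"
    have "eventually (\<lambda>k. C k / real k < \<delta>/2) sequentially"
      by (rule order_tendstoD(2)[OF Clim]) (use dpos in simp)
    then show "eventually (\<lambda>k. eventually (\<lambda>n. \<forall>x. \<bar>G n x - birkhoff_sum \<phi> (\<lambda>x. G k x / real k) n x\<bar> \<le> \<delta> * real n) sequentially) sequentially"
      using eventually_ge_at_top[of "1::nat"]
    proof eventually_elim
      case (elim k)
      then have ck: "C k / real k < \<delta>/2" and k: "k \<ge> 1" by auto
      define M where "M = (\<Sum>m\<in>{1..3*k}. \<bar>Bf m\<bar>)"
      have Mb: "\<forall>m. 1 \<le> m \<longrightarrow> m \<le> 3*k \<longrightarrow> (\<forall>x. \<bar>G m x\<bar> \<le> M)"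
      proof (intro allI impI)
        fix m x assume m: "1 \<le> m" "m \<le> 3*k"
        have "\<bar>G m x\<bar> \<le> Bf m" using Bf m by blast
        also have "\<dots> \<le> \<bar>Bf m\<bar>" by simp
        also have "\<dots> \<le> M" unfolding M_def by (rule member_le_sum) (use m in auto)
        finally show "\<bar>G m x\<bar> \<le> M" .
      qed
      have M0: "M \<ge> 0" by (simp add: M_def sum_nonneg)
      define D where "D = (\<Sum>m\<in>{1..k}. \<bar>C m\<bar>)"
      have Db: "C (i+1) \<le> D" if "i < k" for i
      proof -
        have "C (i+1) \<le> \<bar>C (i+1)\<bar>" by simp
        also have "\<dots> \<le> D" unfolding D_def by (rule member_le_sum) (use that in auto)
        finally show ?thesis .
      qed
      have D0: "D \<ge> 0" by (simp add: D_def sum_nonneg)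
      obtain N1 :: nat where N1: "real N1 \<ge> 2*(D + 6*M)/\<delta>" using real_arch_simple by blast
      show "eventually (\<lambda>n. \<forall>x. \<bar>G n x - birkhoff_sum \<phi> (\<lambda>x. G k x / real k) n x\<bar> \<le> \<delta> * real n) sequentially"
      proof (rule eventually_sequentiallyI[of "max (3*k) N1"], rule allI)
        fix n x assume n: "max (3*k) N1 \<le> n"
        then have nk: "3*k \<le> n" by simp
        define q where "q = n div k - 2"
        note qf = q_facts[OF k nk q_def]
        define T where "T = birkhoff_sum \<phi> (G k) (q*k) (\<phi> x)"
        have stepi: "\<bar>G n x - (\<Sum>j<q. G k ((\<phi>^^(j*k)) ((\<phi>^^(i+1)) x)))\<bar> \<le> D + real q * C k + 2*M" if "i < k" for i
          by (rule waa_step[OF W k that nk q_def Mb Db[OF that]])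
        have idt: "(\<Sum>i<k. \<Sum>j<q. G k ((\<phi>^^(j*k)) ((\<phi>^^(i+1)) x))) = T"
        proof -
          have "(\<phi>^^(j*k)) ((\<phi>^^(i+1)) x) = (\<phi>^^(j*k+i)) (\<phi> x)" for i j
          proof -
            have a: "(\<phi>^^(j*k)) ((\<phi>^^(i+1)) x) = (\<phi>^^(j*k+(i+1))) x" by (rule fp)
            have b: "(\<phi>^^(j*k+i)) ((\<phi>^^1) x) = (\<phi>^^(j*k+i+1)) x" by (rule fp)
            have c: "(\<phi>^^1) x = \<phi> x" by simp
            show ?thesis using a b c by (metis add.assoc)
          qed
          then have "(\<Sum>i<k. \<Sum>j<q. G k ((\<phi>^^(j*k)) ((\<phi>^^(i+1)) x))) = (\<Sum>i<k. \<Sum>j<q. (\<lambda>m. G k ((\<phi>^^m) (\<phi> x))) (j*k+i))"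
            by simp
          also have "\<dots> = (\<Sum>m<q*k. G k ((\<phi>^^m) (\<phi> x)))" by (rule sum_group)
          finally show ?thesis unfolding T_def birkhoff_sum_def .
        qed
        have sumb: "\<bar>real k * G n x - T\<bar> \<le> real k * (D + real q * C k + 2*M)"
        proof -
          have "real k * G n x - T = (\<Sum>i<k. G n x - (\<Sum>j<q. G k ((\<phi>^^(j*k)) ((\<phi>^^(i+1)) x))))"
            unfolding idt[symmetric] by (simp add: sum_subtractf)
          also have "\<bar>\<dots>\<bar> \<le> (\<Sum>i<k. \<bar>G n x - (\<Sum>j<q. G k ((\<phi>^^(j*k)) ((\<phi>^^(i+1)) x)))\<bar>)" by (rule sum_abs)
          also have "\<dots> \<le> (\<Sum>i<k. D + real q * C k + 2*M)" by (rule sum_mono) (use stepi in simp)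
          finally show ?thesis by simp
        qed
        have b1: "\<bar>G n x - T / real k\<bar> \<le> D + real q * C k + 2*M"
        proof -
          have "G n x - T / real k = (real k * G n x - T) / real k" using k by (simp add: field_simps)
          then have "\<bar>G n x - T / real k\<bar> = \<bar>real k * G n x - T\<bar> / real k" by simp
          also have "\<dots> \<le> D + real q * C k + 2*M" using sumb k by (simp add: pos_divide_le_eq mult.commute)
          finally show ?thesis .
        qed
        have one: "birkhoff_sum \<phi> g 1 y = g y" for g y by (simp add: birkhoff_sum_def)
        have nsplit: "n = 1 + (q*k + (n - 1 - q*k))" using qf by linarith
        have Sn: "birkhoff_sum \<phi> (G k) n x = G k x + T + birkhoff_sum \<phi> (G k) (n - 1 - q*k) ((\<phi>^^(q*k)) (\<phi> x))"
          by (subst nsplit, simp only: bs_add one T_def) simp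
        have Mk: "\<forall>y. \<bar>G k y\<bar> \<le> M" using Mb k by simp
        have tail: "\<bar>birkhoff_sum \<phi> (G k) (n - 1 - q*k) ((\<phi>^^(q*k)) (\<phi> x))\<bar> \<le> real (n - 1 - q*k) * M"
          by (rule bs_bound[OF Mk])
        have nq3: "real (n - 1 - q*k) \<le> 3 * real k" using qf by linarith
        have "real (n - 1 - q*k) * M \<le> (3 * real k) * M" using nq3 M0 by (rule mult_right_mono)
        then have b2: "\<bar>birkhoff_sum \<phi> (G k) n x - T\<bar> \<le> M + 3 * real k * M"
          using tail Mk[rule_format, of x] unfolding Sn by linarith
        have b3: "\<bar>T / real k - birkhoff_sum \<phi> (G k) n x / real k\<bar> \<le> 4*M"
        proof -
          have "\<bar>T / real k - birkhoff_sum \<phi> (G k) n x / real k\<bar> = \<bar>birkhoff_sum \<phi> (G k) n x - T\<bar> / real k"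
            by (simp add: diff_divide_distrib[symmetric] abs_minus_commute)
          also have "\<dots> \<le> (M + 3 * real k * M) / real k" using b2 k by (simp add: divide_right_mono)
          also have "\<dots> \<le> 4*M"
          proof -
            have "M \<le> real k * M" using k M0 by (simp add: mult_le_cancel_right1)
            then have "M + 3 * real k * M \<le> 4 * M * real k" by (simp add: algebra_simps)
            then show ?thesis using k by (simp add: pos_divide_le_eq)
          qed
          finally show ?thesis .
        qed
        have b4: "real q * C k \<le> \<delta>/2 * real n"
        proof -
          have qkn: "real q * real k \<le> real n" using qf by (metis of_nat_le_iff of_nat_mult le_add1 le_trans)
          have "C k \<le> \<delta>/2 * real k" using ck k by (simp add: divide_less_eq)
          then have "real q * C k \<le> real q * (\<delta>/2 * real k)" by (rule mult_left_mono) simp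
          also have "\<dots> = \<delta>/2 * (real q * real k)" by simp
          also have "\<dots> \<le> \<delta>/2 * real n" using qkn dpos by simp
          finally show ?thesis .
        qed
        have b5: "D + 6*M \<le> \<delta>/2 * real n"
        proof -
          have "real N1 \<le> real n" using n by simp
          then have "2*(D + 6*M)/\<delta> \<le> real n" using N1 by linarith
          then show ?thesis using dpos by (simp add: divide_le_eq mult.commute)
        qed
        have e: "birkhoff_sum \<phi> (\<lambda>x. G k x / real k) n x = birkhoff_sum \<phi> (G k) n x / real k"
          by (rule bs_div)
        have "\<delta>/2 * real n + \<delta>/2 * real n = \<delta> * real n" by simp
        then show "\<bar>G n x - birkhoff_sum \<phi> (\<lambda>x. G k x / real k) n x\<bar> \<le> \<delta> * real n"
          unfolding e using b1 b3 b4 b5 by linarith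
      qed
    qed
  qed
qed

lemma approxP_exact:
  assumes "\<forall>n\<ge>1. G n = birkhoff_sum \<phi> g n"
  shows "approxP \<phi> G (\<lambda>k. g)"
  unfolding approxP_def
proof (intro allI impI)
  fix \<delta> :: real assume "\<delta> > 0"
  have "eventually (\<lambda>n. \<forall>x. \<bar>G n x - birkhoff_sum \<phi> g n x\<bar> \<le> \<delta> * real n) sequentially"
    using eventually_ge_at_top[of "1::nat"] by eventually_elim (use assms \<open>\<delta> > 0\<close> in simp)
  then show "eventually (\<lambda>k. eventually (\<lambda>n. \<forall>x. \<bar>G n x - birkhoff_sum \<phi> ((\<lambda>k. g) k) n x\<bar> \<le> \<delta> * real n) sequentially) sequentially"
    by simp
qed

theorem theorem6p1:
  fixes \<phi> :: "'a::metric_space \<Rightarrow> 'a" and G :: "nat \<Rightarrow> 'a \<Rightarrow> real"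
  assumes "compact (UNIV :: 'a set)"
    and "continuous_on UNIV \<phi>"
    and "\<forall>n\<ge>1. bfun (G n)"
  shows
   "((\<exists>g. continuous_on UNIV g \<and> (\<forall>n\<ge>1. G n = birkhoff_sum \<phi> g n))
        \<longrightarrow> asymptotically_additive \<phi> G)
  \<and> ((\<exists>g. bfun g \<and> (\<forall>n\<ge>1. G n = birkhoff_sum \<phi> g n)) \<and> tempered_variation \<phi> G
        \<longrightarrow> asymptotically_additive \<phi> G)
  \<and> (weakly_almost_additive \<phi> G \<and> (\<forall>n\<ge>1. continuous_on UNIV (G n))
        \<longrightarrow> asymptotically_additive \<phi> G)
  \<and> (weakly_almost_additive \<phi> G \<and> tempered_variation \<phi> G
        \<longrightarrow> asymptotically_additive \<phi> G)
  \<and> ((\<forall>n\<ge>1. continuous_on UNIV (G n))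
        \<longrightarrow> (asymptotically_additive \<phi> G \<longleftrightarrow> cond5 \<phi> G))
  \<and> (asymptotically_additive \<phi> G \<longleftrightarrow> tempered_variation \<phi> G \<and> cond5 \<phi> G)
  \<and> (asymptotically_additive \<phi> G \<longleftrightarrow>
        tempered_variation \<phi> G \<and> (\<exists>Gk. (\<forall>k. bfun (Gk k)) \<and> asymp_approx \<phi> G Gk))
  \<and> (asymptotically_additive \<phi> G \<longleftrightarrow>
        (\<exists>Gk. (\<forall>k. bfun (Gk k)) \<and> asymp_approx \<phi> G Gk \<and>
           (\<exists>L :: nat \<Rightarrow> ereal.
              (\<forall>k. ((\<lambda>\<epsilon>. limsup (\<lambda>n. var_n \<phi> (\<lambda>m. birkhoff_sum \<phi> (Gk k) m) n \<epsilon>)) \<longlongrightarrow> L k) (at_right 0))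
              \<and> L \<longlonglongrightarrow> 0)))"
proof -
  note cpt = assms(1) and cphi = assms(2)
  have bG: "\<forall>n\<ge>1. bounded (range (G n))" using assms(3) unfolding bfun_def by blast
  have cb: "bounded (range g)" if "continuous_on UNIV g" for g :: "'a \<Rightarrow> real"
    using compact_imp_bounded[OF compact_continuous_image[OF that cpt]] .
  have cbf: "bfun g" if "continuous_on UNIV g" for g :: "'a \<Rightarrow> real"
    unfolding bfun_def using borel_measurable_continuous_onI[OF that] cb[OF that] by blast
  have bfb: "bounded (range g)" if "bfun g" for g :: "'a \<Rightarrow> real" using that unfolding bfun_def by blast
  have AA_iff: "asymptotically_additive \<phi> G \<longleftrightarrow> (\<exists>Gk. (\<forall>k. continuous_on UNIV (Gk k)) \<and> approxP \<phi> G Gk)"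
  proof -
    have "(\<forall>k. continuous_on UNIV (Gk k)) \<Longrightarrow> asymp_approx \<phi> G Gk \<longleftrightarrow> approxP \<phi> G Gk" for Gk
      by (rule approx_iff[OF bG]) (use cb in blast)
    then show ?thesis unfolding asymptotically_additive_def by metis
  qed
  have c5iff: "cond5 \<phi> G \<longleftrightarrow> approxP \<phi> G (\<lambda>k x. G k x / real k)" by (rule cond5_iff[OF bG])
  have TViff: "tempered_variation \<phi> G \<longleftrightarrow> (\<forall>\<delta>>0. osc_ev \<phi> G \<delta>)" by (rule TV_iff)
  have K1: "approxP \<phi> G (\<lambda>k x. G k x / real k)" if "approxP \<phi> G Gk" "\<forall>k. bounded (range (Gk k))" for Gk
    by (rule L_B[OF that])
  have K2: "asymptotically_additive \<phi> G" if "\<forall>\<delta>>0. osc_ev \<phi> G \<delta>" "approxP \<phi> G (\<lambda>k x. G k x / real k)"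
    unfolding AA_iff by (rule L_C[OF cpt cphi bG that])
  have K3: "\<forall>\<delta>>0. osc_ev \<phi> G \<delta>" if "asymptotically_additive \<phi> G"
    using that L_A[OF cpt] unfolding AA_iff by metis
  have K4: "approxP \<phi> G (\<lambda>k x. G k x / real k)" if "asymptotically_additive \<phi> G"
    using that K1 cb unfolding AA_iff by metis
  have P1: "(\<exists>g. continuous_on UNIV g \<and> (\<forall>n\<ge>1. G n = birkhoff_sum \<phi> g n)) \<longrightarrow> asymptotically_additive \<phi> G"
  proof
    assume "\<exists>g. continuous_on UNIV g \<and> (\<forall>n\<ge>1. G n = birkhoff_sum \<phi> g n)"
    then obtain g where g: "continuous_on UNIV g" "\<forall>n\<ge>1. G n = birkhoff_sum \<phi> g n" by blast
    show "asymptotically_additive \<phi> G" unfolding AA_iff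
      using g(1) approxP_exact[OF g(2)] by (intro exI[of _ "\<lambda>k. g"]) simp
  qed
  have P2: "(\<exists>g. bfun g \<and> (\<forall>n\<ge>1. G n = birkhoff_sum \<phi> g n)) \<and> tempered_variation \<phi> G \<longrightarrow> asymptotically_additive \<phi> G"
  proof
    assume a: "(\<exists>g. bfun g \<and> (\<forall>n\<ge>1. G n = birkhoff_sum \<phi> g n)) \<and> tempered_variation \<phi> G"
    then obtain g where g: "bfun g" "\<forall>n\<ge>1. G n = birkhoff_sum \<phi> g n" by blast
    have "\<forall>k. bounded (range ((\<lambda>k. g) k))" using bfb[OF g(1)] by simp
    then have "approxP \<phi> G (\<lambda>k x. G k x / real k)" by (rule K1[OF approxP_exact[OF g(2)]])
    moreover have "\<forall>\<delta>>0. osc_ev \<phi> G \<delta>" using a TViff by blast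
    ultimately show "asymptotically_additive \<phi> G" by (rule K2[rotated])
  qed
  have P3: "weakly_almost_additive \<phi> G \<and> (\<forall>n\<ge>1. continuous_on UNIV (G n)) \<longrightarrow> asymptotically_additive \<phi> G"
  proof
    assume "weakly_almost_additive \<phi> G \<and> (\<forall>n\<ge>1. continuous_on UNIV (G n))"
    then have "approxP \<phi> G (\<lambda>k x. G k x / real k)" "\<forall>k. continuous_on UNIV (\<lambda>x. G k x / real k)"
      using L_D[OF bG] L_E by auto
    then show "asymptotically_additive \<phi> G" unfolding AA_iff by (intro exI[of _ "\<lambda>k x. G k x / real k"]) simp
  qed
  have P4: "weakly_almost_additive \<phi> G \<and> tempered_variation \<phi> G \<longrightarrow> asymptotically_additive \<phi> G"
  proof
    assume "weakly_almost_additive \<phi> G \<and> tempered_variation \<phi> G"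
    then show "asymptotically_additive \<phi> G" using L_D[OF bG, of \<phi>] K2 unfolding TViff by blast
  qed
  have P5: "(\<forall>n\<ge>1. continuous_on UNIV (G n)) \<longrightarrow> (asymptotically_additive \<phi> G \<longleftrightarrow> cond5 \<phi> G)"
  proof
    assume c: "\<forall>n\<ge>1. continuous_on UNIV (G n)"
    show "asymptotically_additive \<phi> G \<longleftrightarrow> cond5 \<phi> G"
    proof
      assume "asymptotically_additive \<phi> G" then show "cond5 \<phi> G" using K4 unfolding c5iff by blast
    next
      assume "cond5 \<phi> G"
      then have "approxP \<phi> G (\<lambda>k x. G k x / real k)" unfolding c5iff .
      moreover have "\<forall>k. continuous_on UNIV (\<lambda>x. G k x / real k)" using L_E[OF c] .
      ultimately show "asymptotically_additive \<phi> G" unfolding AA_iff by (intro exI[of _ "\<lambda>k x. G k x / real k"]) simp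
    qed
  qed
  have P6: "asymptotically_additive \<phi> G \<longleftrightarrow> tempered_variation \<phi> G \<and> cond5 \<phi> G"
    unfolding TViff c5iff using K2 K3 K4 by blast
  have P7: "asymptotically_additive \<phi> G \<longleftrightarrow>
        tempered_variation \<phi> G \<and> (\<exists>Gk. (\<forall>k. bfun (Gk k)) \<and> asymp_approx \<phi> G Gk)"
  proof
    assume aa: "asymptotically_additive \<phi> G"
    then obtain Gk where "\<forall>k. continuous_on UNIV (Gk k)" "asymp_approx \<phi> G Gk"
      unfolding asymptotically_additive_def by blast
    then have "(\<forall>k. bfun (Gk k)) \<and> asymp_approx \<phi> G Gk" using cbf by blast
    moreover have "tempered_variation \<phi> G" using K3[OF aa] TViff by blast
    ultimately show "tempered_variation \<phi> G \<and> (\<exists>Gk. (\<forall>k. bfun (Gk k)) \<and> asymp_approx \<phi> G Gk)"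
      by blast
  next
    assume a: "tempered_variation \<phi> G \<and> (\<exists>Gk. (\<forall>k. bfun (Gk k)) \<and> asymp_approx \<phi> G Gk)"
    then obtain Gk where g: "\<forall>k. bfun (Gk k)" "asymp_approx \<phi> G Gk" by blast
    have "\<forall>k. bounded (range (Gk k))" using g bfb by blast
    then have "approxP \<phi> G Gk" using approx_iff[OF bG] g(2) by blast
    moreover have "\<forall>k. bounded (range (Gk k))" using g bfb by blast
    ultimately have "approxP \<phi> G (\<lambda>k x. G k x / real k)" by (rule K1)
    moreover have "\<forall>\<delta>>0. osc_ev \<phi> G \<delta>" using a TViff by blast
    ultimately show "asymptotically_additive \<phi> G" by (rule K2[rotated])
  qed
  have P8: "asymptotically_additive \<phi> G \<longleftrightarrow>
        (\<exists>Gk. (\<forall>k. bfun (Gk k)) \<and> asymp_approx \<phi> G Gk \<and>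
           (\<exists>L :: nat \<Rightarrow> ereal.
              (\<forall>k. ((\<lambda>\<epsilon>. limsup (\<lambda>n. var_n \<phi> (\<lambda>m. birkhoff_sum \<phi> (Gk k) m) n \<epsilon>)) \<longlongrightarrow> L k) (at_right 0))
              \<and> L \<longlonglongrightarrow> 0))"
  proof
    assume aa: "asymptotically_additive \<phi> G"
    then obtain Gk where g: "\<forall>k. continuous_on UNIV (Gk k)" "asymp_approx \<phi> G Gk"
      unfolding asymptotically_additive_def by blast
    have "\<forall>k. ((\<lambda>\<epsilon>. limsup (\<lambda>n. var_n \<phi> (\<lambda>m. birkhoff_sum \<phi> (Gk k) m) n \<epsilon>)) \<longlongrightarrow> (\<lambda>k. 0::ereal) k) (at_right 0)"
    proof
      fix k
      have "\<forall>\<delta>>0. osc_ev \<phi> (\<lambda>m. birkhoff_sum \<phi> (Gk k) m) \<delta>"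
        using TVS[OF cpt g(1)[rule_format, of k]] by blast
      then show "((\<lambda>\<epsilon>. limsup (\<lambda>n. var_n \<phi> (\<lambda>m. birkhoff_sum \<phi> (Gk k) m) n \<epsilon>)) \<longlongrightarrow> (\<lambda>k. 0::ereal) k) (at_right 0)"
        using osc_lim[of \<phi> "\<lambda>m. birkhoff_sum \<phi> (Gk k) m"] by simp
    qed
    moreover have "(\<lambda>k. 0::ereal) \<longlonglongrightarrow> 0" by simp
    moreover have "\<forall>k. bfun (Gk k)" using g(1) cbf by blast
    ultimately show "\<exists>Gk. (\<forall>k. bfun (Gk k)) \<and> asymp_approx \<phi> G Gk \<and>
           (\<exists>L :: nat \<Rightarrow> ereal.
              (\<forall>k. ((\<lambda>\<epsilon>. limsup (\<lambda>n. var_n \<phi> (\<lambda>m. birkhoff_sum \<phi> (Gk k) m) n \<epsilon>)) \<longlongrightarrow> L k) (at_right 0))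
              \<and> L \<longlonglongrightarrow> 0)"
      using g(2) by (intro exI[of _ Gk] conjI exI[of _ "\<lambda>k. 0::ereal"]) simp_all
  next
    assume "\<exists>Gk. (\<forall>k. bfun (Gk k)) \<and> asymp_approx \<phi> G Gk \<and>
           (\<exists>L :: nat \<Rightarrow> ereal.
              (\<forall>k. ((\<lambda>\<epsilon>. limsup (\<lambda>n. var_n \<phi> (\<lambda>m. birkhoff_sum \<phi> (Gk k) m) n \<epsilon>)) \<longlongrightarrow> L k) (at_right 0))
              \<and> L \<longlonglongrightarrow> 0)"
    then obtain Gk L where g: "\<forall>k. bfun (Gk k)" "asymp_approx \<phi> G Gk"
      and L: "\<forall>k. ((\<lambda>\<epsilon>. limsup (\<lambda>n. var_n \<phi> (\<lambda>m. birkhoff_sum \<phi> (Gk k) m) n \<epsilon>)) \<longlongrightarrow> L k) (at_right 0)"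
        "L \<longlonglongrightarrow> 0"
      by blast
    have bk: "\<forall>k. bounded (range (Gk k))" using g bfb by blast
    have ap: "approxP \<phi> G Gk" using g(2) approx_iff[OF bG bk] by blast
    have tv: "\<forall>\<delta>>0. osc_ev \<phi> G \<delta>" by (rule L_8b[OF ap L])
    have "approxP \<phi> G (\<lambda>k x. G k x / real k)" by (rule K1[OF ap bk])
    then show "asymptotically_additive \<phi> G" by (rule K2[OF tv])
  qed
  show ?thesis by (intro conjI P1 P2 P3 P4 P5 P6 P7 P8)
qed

end
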